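(* Let $D\subset\mathbb{C}^k$ be open and let $\varphi,\psi$ be functions on $\mathbb{C}^k$ that are plurisubharmonic on $D$ with $\|\varphi\|_{L^\infty}\leq 1/2$ and $\|\psi\|_{L^\infty}\leq 1/2$. For $j=1,2$ set $\varphi_j^+:=\varphi^2+j\varphi+6$, $\varphi_j^-:=\varphi^2+j\varphi-6$, $\psi_j^+:=\psi^2+j\psi+6$, $\psi_j^-:=-\psi^2-j\psi+6$, and for $j,l\in\{1,2\}$ define on $\mathbb{C}^k\times\mathbb{C}^k$ \[\Phi_{jl}^+(z,w):=\varphi_j^+(z)\psi_l^+(w),\qquad \Phi_{jl}^-(z,w):=\varphi_j^-(z)\psi_l^-(w).\] Then the functions $\Phi_{jl}^\pm$ are all plurisubharmonic on $D\times D$. *)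

theory Defs
  imports "HOL-Analysis.Analysis"
begin

text \<open>C^k is modelled as the type complex^'n (k = CARD('n)); the product C^k x C^k,
  i.e. C^(2k), is modelled as complex^('n + 'n).\<close>

definition usc_on :: "(complex^'m) set \<Rightarrow> (complex^'m \<Rightarrow> real) \<Rightarrow> bool" where
  "usc_on D u \<longleftrightarrow>
     (\<forall>a\<in>D. \<forall>e>0. \<exists>d>0. \<forall>x\<in>D. dist x a < d \<longrightarrow> u x < u a + e)"

text \<open>For a finite-valued usc function the
  circle integral lies in [-\<infinity>,\<infinity>) and the inequality forces it to be finite, hence
  integrability is part of the condition.\<close>
definition psh_on :: "(complex^'m) set \<Rightarrow> (complex^'m \<Rightarrow> real) \<Rightarrow> bool" where
  "psh_on D u \<longleftrightarrow> usc_on D u \<and>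
     (\<forall>a b. (\<forall>\<zeta>. cmod \<zeta> \<le> 1 \<longrightarrow> a + \<zeta> *s b \<in> D) \<longrightarrow>
        set_integrable lborel {0..2*pi} (\<lambda>t. u (a + exp (\<i> * complex_of_real t) *s b)) \<and>
        u a \<le> (1 / (2*pi)) * (LINT t:{0..2*pi}|lborel. u (a + exp (\<i> * complex_of_real t) *s b)))"

definition vfst :: "complex^('n + 'n) \<Rightarrow> complex^'n" where
  "vfst v = (\<chi> i. v $ Inl i)"
definition vsnd :: "complex^('n + 'n) \<Rightarrow> complex^'n" where
  "vsnd v = (\<chi> i. v $ Inr i)"

end

theory Submission
  imports Defs
begin


lemma vfst_lin: "vfst (a + c *s b) = vfst a + c *s vfst b"
  by (simp add: vfst_def vec_eq_iff)
lemma vsnd_lin: "vsnd (a + c *s b) = vsnd a + c *s vsnd b"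
  by (simp add: vsnd_def vec_eq_iff)
lemma vfst_diff: "vfst (a - b) = vfst a - vfst b"
  by (simp add: vfst_def vec_eq_iff)
lemma vsnd_diff: "vsnd (a - b) = vsnd a - vsnd b"
  by (simp add: vsnd_def vec_eq_iff)

lemma norm_vfst: "norm (vfst x) \<le> norm x"
proof -
  have "(\<Sum>i\<in>UNIV. (norm (vfst x $ i))\<^sup>2) = sum ((\<lambda>j. (norm (x $ j))\<^sup>2) \<circ> Inl) UNIV"
    by (simp add: vfst_def)
  also have "\<dots> = sum (\<lambda>j. (norm (x $ j))\<^sup>2) (range Inl)"
    by (rule sum.reindex[symmetric]) simp
  also have "\<dots> \<le> (\<Sum>j\<in>UNIV. (norm (x $ j))\<^sup>2)"
    by (rule sum_mono2) auto
  finally show ?thesis unfolding norm_vec_def L2_set_def by (rule real_sqrt_le_mono)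
qed

lemma norm_vsnd: "norm (vsnd x) \<le> norm x"
proof -
  have "(\<Sum>i\<in>UNIV. (norm (vsnd x $ i))\<^sup>2) = sum ((\<lambda>j. (norm (x $ j))\<^sup>2) \<circ> Inr) UNIV"
    by (simp add: vsnd_def)
  also have "\<dots> = sum (\<lambda>j. (norm (x $ j))\<^sup>2) (range Inr)"
    by (rule sum.reindex[symmetric]) simp
  also have "\<dots> \<le> (\<Sum>j\<in>UNIV. (norm (x $ j))\<^sup>2)"
    by (rule sum_mono2) auto
  finally show ?thesis unfolding norm_vec_def L2_set_def by (rule real_sqrt_le_mono)
qed

lemma dist_vfst: "dist (vfst x) (vfst a) \<le> dist x a"
  using norm_vfst[of "x - a"] by (simp add: dist_norm vfst_diff)
lemma dist_vsnd: "dist (vsnd x) (vsnd a) \<le> dist x a"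
  using norm_vsnd[of "x - a"] by (simp add: dist_norm vsnd_diff)

lemma set_int_bdd:
  fixes h :: "real \<Rightarrow> real"
  assumes "(\<lambda>t. indicator {a..b} t *\<^sub>R h t) \<in> borel_measurable lborel"
    and "\<And>t. t \<in> {a..b} \<Longrightarrow> \<bar>h t\<bar> \<le> B"
  shows "set_integrable lborel {a..b} h"
  unfolding set_integrable_def
  by (rule integrableI_bounded_set[where A="{a..b}" and B=B]) (use assms in \<open>auto simp: indicator_def emeasure_lborel_Icc_eq\<close>)

lemma set_int_const: "set_integrable lborel {a..b::real} (\<lambda>_. c::real)"
  by (rule set_int_bdd[where B="\<bar>c\<bar>"]) auto


lemma mean_bound:
  fixes f :: "real \<Rightarrow> real"
  assumes "set_integrable lborel {0..2*pi} f" and "\<And>t. \<bar>f t\<bar> \<le> 1/2"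
  shows "\<bar>(1/(2*pi)) * (LINT t:{0..2*pi}|lborel. f t)\<bar> \<le> 1/2"
proof -
  have "(LINT t:{0..2*pi}|lborel. f t) \<le> (LINT t:{0..2*pi}|lborel. 1/2)"
    by (rule set_integral_mono[OF assms(1) set_int_const]) (use assms(2) abs_le_D1 in blast)
  also have "\<dots> = pi" by (subst set_integral_const) (auto simp: emeasure_lborel_Icc_eq)
  finally have 1: "(LINT t:{0..2*pi}|lborel. f t) \<le> pi" .
  have "(LINT t:{0..2*pi}|lborel. -1/2) \<le> (LINT t:{0..2*pi}|lborel. f t)"
  proof (rule set_integral_mono[OF set_int_const assms(1)])
    fix t show "-1/2 \<le> f t" using assms(2)[of t] by linarith
  qed
  moreover have "(LINT t:{0..2*pi}|lborel. -1/2) = - pi"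
    by (subst set_integral_const) (auto simp: emeasure_lborel_Icc_eq)
  ultimately have 2: "- pi \<le> (LINT t:{0..2*pi}|lborel. f t)" by simp
  show ?thesis using 1 2 pi_gt_zero by (auto simp: abs_le_iff field_simps)
qed

lemma psh_comp:
  fixes D :: "(complex^'n) set" and u w :: "complex^'n \<Rightarrow> real" and F :: "real \<Rightarrow> real \<Rightarrow> real"
  assumes pu: "psh_on D u" and pw: "psh_on D w"
    and bu: "\<And>z. \<bar>u z\<bar> \<le> 1/2" and bw: "\<And>z. \<bar>w z\<bar> \<le> 1/2"
    and Fc: "continuous_on UNIV (\<lambda>p. F (fst p) (snd p))"
    and Fm: "\<And>x y x' y'. \<bar>x\<bar> \<le> 1/2 \<Longrightarrow> \<bar>y\<bar> \<le> 1/2 \<Longrightarrow> \<bar>x'\<bar> \<le> 1/2 \<Longrightarrow> \<bar>y'\<bar> \<le> 1/2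
              \<Longrightarrow> x \<le> x' \<Longrightarrow> y \<le> y' \<Longrightarrow> F x y \<le> F x' y'"
    and Ft: "\<And>x0 y0. \<bar>x0\<bar> \<le> 1/2 \<Longrightarrow> \<bar>y0\<bar> \<le> 1/2 \<Longrightarrow> \<exists>p q. \<forall>x y. \<bar>x\<bar> \<le> 1/2 \<longrightarrow> \<bar>y\<bar> \<le> 1/2
              \<longrightarrow> F x0 y0 + p*(x-x0) + q*(y-y0) \<le> F x y"
  shows "psh_on {v. vfst v \<in> D \<and> vsnd v \<in> D} (\<lambda>v. F (u (vfst v)) (w (vsnd v)))"
  unfolding psh_on_def
proof (intro conjI allI impI)
  show "usc_on {v. vfst v \<in> D \<and> vsnd v \<in> D} (\<lambda>v. F (u (vfst v)) (w (vsnd v)))"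
    unfolding usc_on_def
  proof (intro ballI allI impI)
    fix a :: "complex^('n+'n)" and e :: real
    assume aD: "a \<in> {v. vfst v \<in> D \<and> vsnd v \<in> D}" and e: "e > 0"
    define x0 where "x0 = u (vfst a)"
    define y0 where "y0 = w (vsnd a)"
    obtain \<delta> where \<delta>: "\<delta> > 0" and
      h\<delta>: "\<And>p. dist p (x0, y0) < \<delta> \<Longrightarrow> dist (F (fst p) (snd p)) (F x0 y0) < e"
      using Fc e unfolding continuous_on_iff by (metis UNIV_I fst_conv snd_conv)
    have "usc_on D u" "usc_on D w" using pu pw unfolding psh_on_def by auto
    then obtain d1 d2 where d1: "d1 > 0" "\<And>z. z \<in> D \<Longrightarrow> dist z (vfst a) < d1 \<Longrightarrow> u z < x0 + \<delta>/2"
      and d2: "d2 > 0" "\<And>z. z \<in> D \<Longrightarrow> dist z (vsnd a) < d2 \<Longrightarrow> w z < y0 + \<delta>/2"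
      using aD \<delta> unfolding usc_on_def x0_def y0_def
      by (metis (no_types, lifting) half_gt_zero mem_Collect_eq)
    show "\<exists>d>0. \<forall>x\<in>{v. vfst v \<in> D \<and> vsnd v \<in> D}. dist x a < d \<longrightarrow>
            F (u (vfst x)) (w (vsnd x)) < F (u (vfst a)) (w (vsnd a)) + e"
    proof (intro exI[of _ "min d1 d2"] conjI ballI impI)
      show "min d1 d2 > 0" using d1 d2 by simp
      fix x assume xD: "x \<in> {v. vfst v \<in> D \<and> vsnd v \<in> D}" and dx: "dist x a < min d1 d2"
      have ux: "u (vfst x) < x0 + \<delta>/2"
        using d1(2)[of "vfst x"] xD dx dist_vfst[of x a] by auto
      have wx: "w (vsnd x) < y0 + \<delta>/2"
        using d2(2)[of "vsnd x"] xD dx dist_vsnd[of x a] by auto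
      define x' where "x' = max (u (vfst x)) x0"
      define y' where "y' = max (w (vsnd x)) y0"
      have bx': "\<bar>x'\<bar> \<le> 1/2" "\<bar>y'\<bar> \<le> 1/2"
        using bu[of "vfst x"] bu[of "vfst a"] bw[of "vsnd x"] bw[of "vsnd a"] unfolding x'_def y'_def x0_def y0_def
        by (auto simp: abs_le_iff max_def)
      have "F (u (vfst x)) (w (vsnd x)) \<le> F x' y'"
        by (rule Fm) (use bu bw bx' in \<open>auto simp: x'_def y'_def\<close>)
      moreover have "dist (x', y') (x0, y0) < \<delta>"
      proof -
        have "dist (x', y') (x0, y0) = norm (x' - x0, y' - y0)" by (simp add: dist_norm)
        also have "\<dots> \<le> norm (x' - x0) + norm (y' - y0)" by (rule norm_Pair_le)
        also have "\<dots> < \<delta>" using ux wx \<delta> by (auto simp: x'_def y'_def)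
        finally show ?thesis .
      qed
      then have "dist (F x' y') (F x0 y0) < e" using h\<delta> by fastforce
      ultimately show "F (u (vfst x)) (w (vsnd x)) < F (u (vfst a)) (w (vsnd a)) + e"
        unfolding x0_def y0_def by (auto simp: dist_real_def)
    qed
  qed
next
  fix a b :: "complex^('n+'n)"
  assume disc: "\<forall>\<zeta>. cmod \<zeta> \<le> 1 \<longrightarrow> a + \<zeta> *s b \<in> {v. vfst v \<in> D \<and> vsnd v \<in> D}"
  define f where "f = (\<lambda>t. u (vfst a + exp (\<i> * complex_of_real t) *s vfst b))"
  define g where "g = (\<lambda>t. w (vsnd a + exp (\<i> * complex_of_real t) *s vsnd b))"
  have d1: "\<forall>\<zeta>. cmod \<zeta> \<le> 1 \<longrightarrow> vfst a + \<zeta> *s vfst b \<in> D" using disc by (auto simp: vfst_lin)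
  have d2: "\<forall>\<zeta>. cmod \<zeta> \<le> 1 \<longrightarrow> vsnd a + \<zeta> *s vsnd b \<in> D" using disc by (auto simp: vsnd_lin)
  have fi: "set_integrable lborel {0..2*pi} f" and fm: "u (vfst a) \<le> (1/(2*pi)) * (LINT t:{0..2*pi}|lborel. f t)"
    using pu d1 unfolding psh_on_def f_def by blast+
  have gi: "set_integrable lborel {0..2*pi} g" and gm: "w (vsnd a) \<le> (1/(2*pi)) * (LINT t:{0..2*pi}|lborel. g t)"
    using pw d2 unfolding psh_on_def g_def by blast+
  have eq: "(\<lambda>t. F (u (vfst (a + exp (\<i> * complex_of_real t) *s b))) (w (vsnd (a + exp (\<i> * complex_of_real t) *s b))))
      = (\<lambda>t. F (f t) (g t))" by (simp add: vfst_lin vsnd_lin f_def g_def)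
  have bf: "\<And>t. \<bar>f t\<bar> \<le> 1/2" "\<And>t. \<bar>g t\<bar> \<le> 1/2" using bu bw by (auto simp: f_def g_def)
  define A where "A = {0..2*pi}"
  have Fmeas: "(\<lambda>p. F (fst p) (snd p)) \<in> borel_measurable borel"
    using Fc by (rule borel_measurable_continuous_onI)
  have fmeas: "(\<lambda>t. indicator A t *\<^sub>R f t) \<in> borel_measurable lborel"
    using fi unfolding set_integrable_def A_def by (rule borel_measurable_integrable)
  have gmeas: "(\<lambda>t. indicator A t *\<^sub>R g t) \<in> borel_measurable lborel"
    using gi unfolding set_integrable_def A_def by (rule borel_measurable_integrable)
  have Gmeas: "(\<lambda>t. indicator A t *\<^sub>R F (f t) (g t)) \<in> borel_measurable lborel"
  proof -
    have "(\<lambda>t. indicator A t *\<^sub>R F (f t) (g t)) =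
        (\<lambda>t. indicator A t * (\<lambda>p. F (fst p) (snd p)) (indicator A t *\<^sub>R f t, indicator A t *\<^sub>R g t))"
      by (auto simp: indicator_def)
    also have "\<dots> \<in> borel_measurable lborel"
      by (intro borel_measurable_times borel_measurable_indicator measurable_compose[OF _ Fmeas]
          borel_measurable_Pair fmeas gmeas) (simp add: A_def)
    finally show ?thesis .
  qed
  have Fb: "\<And>x y. \<bar>x\<bar> \<le> 1/2 \<Longrightarrow> \<bar>y\<bar> \<le> 1/2 \<Longrightarrow> \<bar>F x y\<bar> \<le> \<bar>F (-1/2) (-1/2)\<bar> + \<bar>F (1/2) (1/2)\<bar>"
  proof -
    fix x y :: real assume "\<bar>x\<bar> \<le> 1/2" "\<bar>y\<bar> \<le> 1/2"
    then have "F (-1/2) (-1/2) \<le> F x y" "F x y \<le> F (1/2) (1/2)"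
      by (auto intro!: Fm simp: abs_le_iff)
    then show "\<bar>F x y\<bar> \<le> \<bar>F (-1/2) (-1/2)\<bar> + \<bar>F (1/2) (1/2)\<bar>" by linarith
  qed
  have Gi: "set_integrable lborel A (\<lambda>t. F (f t) (g t))"
    unfolding A_def by (rule set_int_bdd[OF Gmeas[unfolded A_def]]) (use Fb bf in blast)
  show "set_integrable lborel {0..2*pi}
      (\<lambda>t. F (u (vfst (a + exp (\<i> * complex_of_real t) *s b))) (w (vsnd (a + exp (\<i> * complex_of_real t) *s b))))"
    using Gi unfolding eq A_def .
  define U where "U = (1/(2*pi)) * (LINT t:A|lborel. f t)"
  define V where "V = (1/(2*pi)) * (LINT t:A|lborel. g t)"
  have bU: "\<bar>U\<bar> \<le> 1/2" unfolding U_def A_def by (rule mean_bound[OF fi bf(1)])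
  have bV: "\<bar>V\<bar> \<le> 1/2" unfolding V_def A_def by (rule mean_bound[OF gi bf(2)])
  obtain p q where pq: "\<And>x y. \<bar>x\<bar> \<le> 1/2 \<Longrightarrow> \<bar>y\<bar> \<le> 1/2 \<Longrightarrow> F U V + p*(x-U) + q*(y-V) \<le> F x y"
    using Ft[OF bU bV] by blast
  have "F (u (vfst a)) (w (vsnd a)) \<le> F U V"
    by (rule Fm) (use bu bw bU bV fm gm in \<open>auto simp: U_def V_def A_def\<close>)
  also have "F U V = (1/(2*pi)) * (LINT t:A|lborel. (F U V - p*U - q*V) + p * f t + q * g t)"
  proof -
    have ci: "set_integrable lborel A (\<lambda>_. F U V - p*U - q*V)" unfolding A_def by (rule set_int_const)
    have "(LINT t:A|lborel. (F U V - p*U - q*V) + p * f t + q * g t)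
        = (LINT t:A|lborel. (F U V - p*U - q*V)) + p * (LINT t:A|lborel. f t) + q * (LINT t:A|lborel. g t)"
      using ci fi gi by (simp add: A_def)
    also have "(LINT t:A|lborel. (F U V - p*U - q*V)) = 2*pi*(F U V - p*U - q*V)"
      unfolding A_def by (subst set_integral_const) (auto simp: emeasure_lborel_Icc_eq)
    finally show ?thesis using pi_gt_zero by (simp add: U_def V_def field_simps)
  qed
  also have "\<dots> \<le> (1/(2*pi)) * (LINT t:A|lborel. F (f t) (g t))"
  proof -
    have ci: "set_integrable lborel A (\<lambda>_. F U V - p*U - q*V)" unfolding A_def by (rule set_int_const)
    have "(LINT t:A|lborel. (F U V - p*U - q*V) + p * f t + q * g t) \<le> (LINT t:A|lborel. F (f t) (g t))"
    proof (rule set_integral_mono[OF _ Gi])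
      show "set_integrable lborel A (\<lambda>t. F U V - p * U - q * V + p * f t + q * g t)"
        using ci fi gi by (simp add: A_def)
      fix t show "F U V - p * U - q * V + p * f t + q * g t \<le> F (f t) (g t)"
        using pq[OF bf(1)[of t] bf(2)[of t]] by (simp add: algebra_simps)
    qed
    then show ?thesis using pi_gt_zero by (simp add: divide_right_mono)
  qed
  finally show "F (u (vfst a)) (w (vsnd a)) \<le> (1/(2*pi)) * (LINT t:{0..2*pi}|lborel.
      F (u (vfst (a + exp (\<i> * complex_of_real t) *s b))) (w (vsnd (a + exp (\<i> * complex_of_real t) *s b))))"
    unfolding eq A_def .
qed



lemma quad_mono:
  fixes x x' c :: real
  assumes "\<bar>x\<bar> \<le> 1/2" "\<bar>x'\<bar> \<le> 1/2" "x \<le> x'" "1 \<le> c"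
  shows "x\<^sup>2 + c*x \<le> x'\<^sup>2 + c*x'"
proof -
  have "0 \<le> (x' - x) * (x' + x + c)" using assms by (intro mult_nonneg_nonneg) (auto simp: abs_le_iff)
  then show ?thesis by (simp add: algebra_simps power2_eq_square)
qed

lemma quad_bnd:
  fixes x c :: real
  assumes "\<bar>x\<bar> \<le> 1/2" "1 \<le> c" "c \<le> 2"
  shows "-1 \<le> x\<^sup>2 + c*x" "x\<^sup>2 + c*x \<le> 5/4"
proof -
  have "\<bar>c*x\<bar> \<le> 2 * (1/2)" unfolding abs_mult using assms by (intro mult_mono) auto
  then have cx: "-1 \<le> c*x" "c*x \<le> 1" by (auto dest: abs_le_D1 abs_le_D2)
  have "\<bar>x\<bar>*\<bar>x\<bar> \<le> 1/2*(1/2)" by (rule mult_mono) (use assms in auto)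
  then have "x\<^sup>2 \<le> 1/4" by (simp add: power2_eq_square)
  moreover have "0 \<le> x\<^sup>2" by simp
  ultimately show "-1 \<le> x\<^sup>2 + c*x" "x\<^sup>2 + c*x \<le> 5/4" using cx by linarith+
qed

lemma core_ineq:
  fixes h k s t A B :: real
  assumes "\<bar>s\<bar> \<le> 3" "\<bar>t\<bar> \<le> 3" "9/2 \<le> A" "9/2 \<le> B"
  shows "0 \<le> (h * s)*(k*t) + A*k\<^sup>2 + B*h\<^sup>2" "0 \<le> -((h * s)*(k*t)) + A*k\<^sup>2 + B*h\<^sup>2"
proof -
  have st: "\<bar>s*t\<bar> \<le> 9" unfolding abs_mult using assms mult_mono[of "\<bar>s\<bar>" 3 "\<bar>t\<bar>" 3] by auto
  have e: "\<bar>(h * s)*(k*t)\<bar> = \<bar>s*t\<bar> * (\<bar>h\<bar>*\<bar>k\<bar>)" by (simp add: abs_mult algebra_simps)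
  have "\<bar>(h * s)*(k*t)\<bar> \<le> 9 * (\<bar>h\<bar>*\<bar>k\<bar>)" unfolding e by (rule mult_right_mono[OF st]) simp
  moreover have "2*(\<bar>h\<bar>*\<bar>k\<bar>) \<le> h\<^sup>2 + k\<^sup>2"
  proof -
    have "0 \<le> (\<bar>h\<bar> - \<bar>k\<bar>)\<^sup>2" by simp
    then show ?thesis by (simp add: power2_eq_square algebra_simps)
  qed
  moreover have "9/2 * k\<^sup>2 \<le> A*k\<^sup>2" by (rule mult_right_mono) (use assms in auto)
  moreover have "9/2 * h\<^sup>2 \<le> B*h\<^sup>2" by (rule mult_right_mono) (use assms in auto)
  ultimately show "0 \<le> (h * s)*(k*t) + A*k\<^sup>2 + B*h\<^sup>2" "0 \<le> -((h * s)*(k*t)) + A*k\<^sup>2 + B*h\<^sup>2"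
    by (auto dest!: abs_le_D1 abs_le_D2)
qed

lemma Fp_mono:
  fixes j l x y x' y' :: real
  assumes "1 \<le> j" "j \<le> 2" "1 \<le> l" "l \<le> 2"
    "\<bar>x\<bar> \<le> 1/2" "\<bar>y\<bar> \<le> 1/2" "\<bar>x'\<bar> \<le> 1/2" "\<bar>y'\<bar> \<le> 1/2" "x \<le> x'" "y \<le> y'"
  shows "(x\<^sup>2 + j*x + 6) * (y\<^sup>2 + l*y + 6) \<le> (x'\<^sup>2 + j*x' + 6) * (y'\<^sup>2 + l*y' + 6)"
proof -
  have a: "x\<^sup>2 + j*x + 6 \<le> x'\<^sup>2 + j*x' + 6" using quad_mono[of x x' j] assms by simp
  have b: "y\<^sup>2 + l*y + 6 \<le> y'\<^sup>2 + l*y' + 6" using quad_mono[of y y' l] assms by simp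
  have c: "0 \<le> x\<^sup>2 + j*x + 6" "0 \<le> y\<^sup>2 + l*y + 6" using quad_bnd[of x j] quad_bnd[of y l] assms by auto
  show ?thesis by (rule mult_mono[OF a b]) (use a c in auto)
qed

lemma Fm_mono:
  fixes j l x y x' y' :: real
  assumes "1 \<le> j" "j \<le> 2" "1 \<le> l" "l \<le> 2"
    "\<bar>x\<bar> \<le> 1/2" "\<bar>y\<bar> \<le> 1/2" "\<bar>x'\<bar> \<le> 1/2" "\<bar>y'\<bar> \<le> 1/2" "x \<le> x'" "y \<le> y'"
  shows "(x\<^sup>2 + j*x - 6) * (- y\<^sup>2 - l*y + 6) \<le> (x'\<^sup>2 + j*x' - 6) * (- y'\<^sup>2 - l*y' + 6)"
proof -
  have a: "x\<^sup>2 + j*x - 6 \<le> x'\<^sup>2 + j*x' - 6" using quad_mono[of x x' j] assms by simp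
  have b: "- y\<^sup>2 - l*y + 6 \<ge> - y'\<^sup>2 - l*y' + 6" using quad_mono[of y y' l] assms by simp
  have c: "x'\<^sup>2 + j*x' - 6 \<le> 0" "0 \<le> - y\<^sup>2 - l*y + 6" using quad_bnd[of x' j] quad_bnd[of y l] assms by auto
  have "(x\<^sup>2 + j*x - 6) * (- y\<^sup>2 - l*y + 6) \<le> (x'\<^sup>2 + j*x' - 6) * (- y\<^sup>2 - l*y + 6)"
    by (rule mult_right_mono[OF a c(2)])
  also have "\<dots> \<le> (x'\<^sup>2 + j*x' - 6) * (- y'\<^sup>2 - l*y' + 6)"
    by (rule mult_left_mono_neg[OF b c(1)])
  finally show ?thesis .
qed

lemma Fp_tan:
  fixes j l x0 y0 :: real
  assumes "1 \<le> j" "j \<le> 2" "1 \<le> l" "l \<le> 2" "\<bar>x0\<bar> \<le> 1/2" "\<bar>y0\<bar> \<le> 1/2"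
  shows "\<exists>p q. \<forall>x y. \<bar>x\<bar> \<le> 1/2 \<longrightarrow> \<bar>y\<bar> \<le> 1/2 \<longrightarrow>
     (x0\<^sup>2 + j*x0 + 6) * (y0\<^sup>2 + l*y0 + 6) + p*(x-x0) + q*(y-y0) \<le> (x\<^sup>2 + j*x + 6) * (y\<^sup>2 + l*y + 6)"
proof (intro exI allI impI)
  fix x y :: real assume x: "\<bar>x\<bar> \<le> 1/2" and y: "\<bar>y\<bar> \<le> 1/2"
  have s: "\<bar>x + x0 + j\<bar> \<le> 3" "\<bar>y + y0 + l\<bar> \<le> 3" using assms x y by (auto simp: abs_le_iff)
  have A: "9/2 \<le> x0*x0 + j*x0 + 6" using quad_bnd[of x0 j] assms by (simp add: power2_eq_square)
  have B: "9/2 \<le> y0*y0 + l*y0 + 6" using quad_bnd[of y0 l] assms by (simp add: power2_eq_square)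
  have c: "0 \<le> ((x-x0)*(x + x0 + j))*((y-y0)*(y + y0 + l)) + (x0*x0 + j*x0 + 6)*(y-y0)\<^sup>2 + (y0*y0 + l*y0 + 6)*(x-x0)\<^sup>2"
    by (rule core_ineq(1)[OF s A B])
  have id: "(x*x + j*x + 6) * (y*y + l*y + 6) - ((x0*x0 + j*x0 + 6) * (y0*y0 + l*y0 + 6) + ((2*x0+j)*(y0*y0 + l*y0 + 6))*(x-x0) + ((x0*x0 + j*x0 + 6)*(2*y0+l))*(y-y0))
     = ((x-x0)*(x + x0 + j))*((y-y0)*(y + y0 + l)) + (x0*x0 + j*x0 + 6)*((y-y0)*(y-y0)) + (y0*y0 + l*y0 + 6)*((x-x0)*(x-x0))"
    by (simp add: algebra_simps)
  show "(x0\<^sup>2 + j*x0 + 6) * (y0\<^sup>2 + l*y0 + 6) + ((2*x0+j)*(y0*y0 + l*y0 + 6))*(x-x0) + ((x0*x0 + j*x0 + 6)*(2*y0+l))*(y-y0)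
       \<le> (x\<^sup>2 + j*x + 6) * (y\<^sup>2 + l*y + 6)"
    using c id unfolding power2_eq_square by linarith
qed

lemma Fm_tan:
  fixes j l x0 y0 :: real
  assumes "1 \<le> j" "j \<le> 2" "1 \<le> l" "l \<le> 2" "\<bar>x0\<bar> \<le> 1/2" "\<bar>y0\<bar> \<le> 1/2"
  shows "\<exists>p q. \<forall>x y. \<bar>x\<bar> \<le> 1/2 \<longrightarrow> \<bar>y\<bar> \<le> 1/2 \<longrightarrow>
     (x0\<^sup>2 + j*x0 - 6) * (- y0\<^sup>2 - l*y0 + 6) + p*(x-x0) + q*(y-y0) \<le> (x\<^sup>2 + j*x - 6) * (- y\<^sup>2 - l*y + 6)"
proof (intro exI allI impI)
  fix x y :: real assume x: "\<bar>x\<bar> \<le> 1/2" and y: "\<bar>y\<bar> \<le> 1/2"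
  have s: "\<bar>x + x0 + j\<bar> \<le> 3" "\<bar>y + y0 + l\<bar> \<le> 3" using assms x y by (auto simp: abs_le_iff)
  have A: "9/2 \<le> -(x0*x0 + j*x0 - 6)" using quad_bnd[of x0 j] assms by (simp add: power2_eq_square)
  have B: "9/2 \<le> - (y0*y0) - l*y0 + 6" using quad_bnd[of y0 l] assms by (simp add: power2_eq_square)
  have c: "0 \<le> -(((x-x0)*(x + x0 + j))*((y-y0)*(y + y0 + l))) + (-(x0*x0 + j*x0 - 6))*(y-y0)\<^sup>2 + (- (y0*y0) - l*y0 + 6)*(x-x0)\<^sup>2"
    by (rule core_ineq(2)[OF s A B])
  have id: "(x*x + j*x - 6) * (- (y*y) - l*y + 6) - ((x0*x0 + j*x0 - 6) * (- (y0*y0) - l*y0 + 6) + ((2*x0+j)*(- (y0*y0) - l*y0 + 6))*(x-x0) + ((x0*x0 + j*x0 - 6)*(-2*y0-l))*(y-y0))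
     = -(((x-x0)*(x + x0 + j))*((y-y0)*(y + y0 + l))) + (-(x0*x0 + j*x0 - 6))*((y-y0)*(y-y0)) + (- (y0*y0) - l*y0 + 6)*((x-x0)*(x-x0))"
    by (simp add: algebra_simps)
  show "(x0\<^sup>2 + j*x0 - 6) * (- y0\<^sup>2 - l*y0 + 6) + ((2*x0+j)*(- (y0*y0) - l*y0 + 6))*(x-x0) + ((x0*x0 + j*x0 - 6)*(-2*y0-l))*(y-y0)
       \<le> (x\<^sup>2 + j*x - 6) * (- y\<^sup>2 - l*y + 6)"
    using c id unfolding power2_eq_square by linarith
qed


theorem lemma3p1:
  fixes D :: "(complex^'n) set" and \<phi> \<psi> :: "complex^'n \<Rightarrow> real"
  assumes "open D"
    and "psh_on D \<phi>" and "psh_on D \<psi>"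
    and "\<forall>z. \<bar>\<phi> z\<bar> \<le> 1/2" and "\<forall>z. \<bar>\<psi> z\<bar> \<le> 1/2"
    and "j \<in> {1,2::nat}" and "l \<in> {1,2::nat}"
  shows "psh_on {v. vfst v \<in> D \<and> vsnd v \<in> D}
           (\<lambda>v. ((\<phi> (vfst v))\<^sup>2 + real j * \<phi> (vfst v) + 6) *
                ((\<psi> (vsnd v))\<^sup>2 + real l * \<psi> (vsnd v) + 6))
       \<and> psh_on {v. vfst v \<in> D \<and> vsnd v \<in> D}
           (\<lambda>v. ((\<phi> (vfst v))\<^sup>2 + real j * \<phi> (vfst v) - 6) *
                (- (\<psi> (vsnd v))\<^sup>2 - real l * \<psi> (vsnd v) + 6))"
proof -
  have j: "1 \<le> real j" "real j \<le> 2" and l: "1 \<le> real l" "real l \<le> 2" using assms(6,7) by auto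
  have bu: "\<And>z. \<bar>\<phi> z\<bar> \<le> 1/2" and bw: "\<And>z. \<bar>\<psi> z\<bar> \<le> 1/2" using assms(4,5) by auto
  have 1: "psh_on {v. vfst v \<in> D \<and> vsnd v \<in> D}
     (\<lambda>v. (\<lambda>x y. (x\<^sup>2 + real j * x + 6) * (y\<^sup>2 + real l * y + 6)) (\<phi> (vfst v)) (\<psi> (vsnd v)))"
  proof (rule psh_comp[OF assms(2,3) bu bw])
    show "continuous_on UNIV (\<lambda>p. (\<lambda>x y. (x\<^sup>2 + real j * x + 6) * (y\<^sup>2 + real l * y + 6)) (fst p) (snd p))"
      by (intro continuous_intros)
  next
    fix x y x' y' :: real
    assume "\<bar>x\<bar> \<le> 1/2" "\<bar>y\<bar> \<le> 1/2" "\<bar>x'\<bar> \<le> 1/2" "\<bar>y'\<bar> \<le> 1/2" "x \<le> x'" "y \<le> y'"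
    then show "(\<lambda>x y. (x\<^sup>2 + real j * x + 6) * (y\<^sup>2 + real l * y + 6)) x y
             \<le> (\<lambda>x y. (x\<^sup>2 + real j * x + 6) * (y\<^sup>2 + real l * y + 6)) x' y'"
      using Fp_mono[OF j l] by simp
  next
    fix x0 y0 :: real assume "\<bar>x0\<bar> \<le> 1/2" "\<bar>y0\<bar> \<le> 1/2"
    then show "\<exists>p q. \<forall>x y. \<bar>x\<bar> \<le> 1/2 \<longrightarrow> \<bar>y\<bar> \<le> 1/2 \<longrightarrow>
       (\<lambda>x y. (x\<^sup>2 + real j * x + 6) * (y\<^sup>2 + real l * y + 6)) x0 y0 + p*(x-x0) + q*(y-y0)
         \<le> (\<lambda>x y. (x\<^sup>2 + real j * x + 6) * (y\<^sup>2 + real l * y + 6)) x y"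
      using Fp_tan[OF j l] by simp
  qed
  have 2: "psh_on {v. vfst v \<in> D \<and> vsnd v \<in> D}
     (\<lambda>v. (\<lambda>x y. (x\<^sup>2 + real j * x - 6) * (- y\<^sup>2 - real l * y + 6)) (\<phi> (vfst v)) (\<psi> (vsnd v)))"
  proof (rule psh_comp[OF assms(2,3) bu bw])
    show "continuous_on UNIV (\<lambda>p. (\<lambda>x y. (x\<^sup>2 + real j * x - 6) * (- y\<^sup>2 - real l * y + 6)) (fst p) (snd p))"
      by (intro continuous_intros)
  next
    fix x y x' y' :: real
    assume "\<bar>x\<bar> \<le> 1/2" "\<bar>y\<bar> \<le> 1/2" "\<bar>x'\<bar> \<le> 1/2" "\<bar>y'\<bar> \<le> 1/2" "x \<le> x'" "y \<le> y'"
    then show "(\<lambda>x y. (x\<^sup>2 + real j * x - 6) * (- y\<^sup>2 - real l * y + 6)) x y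
             \<le> (\<lambda>x y. (x\<^sup>2 + real j * x - 6) * (- y\<^sup>2 - real l * y + 6)) x' y'"
      using Fm_mono[OF j l] by simp
  next
    fix x0 y0 :: real assume "\<bar>x0\<bar> \<le> 1/2" "\<bar>y0\<bar> \<le> 1/2"
    then show "\<exists>p q. \<forall>x y. \<bar>x\<bar> \<le> 1/2 \<longrightarrow> \<bar>y\<bar> \<le> 1/2 \<longrightarrow>
       (\<lambda>x y. (x\<^sup>2 + real j * x - 6) * (- y\<^sup>2 - real l * y + 6)) x0 y0 + p*(x-x0) + q*(y-y0)
         \<le> (\<lambda>x y. (x\<^sup>2 + real j * x - 6) * (- y\<^sup>2 - real l * y + 6)) x y"
      using Fm_tan[OF j l] by simp
  qed
  from 1 2 show ?thesis by simp
qed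

end
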